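(* Let $n$ and $k$ be positive integers with $n\ge3k$. Then $B_2(n,k,2k;3)\ge 2^{\lfloor (n-k)/k\rfloor}$.
   Context: For a prime power $q$, $\mathcal{G}_q(n,k)$ denotes the set of all $k$-dimensional subspaces of $\mathbb{F}_q^n$. An $\alpha$-$(n,k,\delta)_q^c$ covering Grassmannian code is a subset $\mathcal{C}\subseteq\mathcal{G}_q(n,k)$ (no repeated codewords) such that every set of $\alpha$ distinct codewords of $\mathcal{C}$ spans a subspace of $\mathbb{F}_q^n$ of dimension at least $k+\delta$. $B_q(n,k,\delta;\alpha)$ denotes the maximum size of an $\alpha$-$(n,k,\delta)_q^c$ code. *)

theory Defs
  imports "HOL-Analysis.Analysis" "HOL-Library.Z2"
begin

text \<open>The ambient space F_q^n is rendered as ('a::field)^'n with CARD('n) = n.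
  Grassmannian: all k-dimensional subspaces.\<close>
definition grassmannian :: "nat \<Rightarrow> (('a::field)^'n) set set" where
  "grassmannian k = {U. vec.subspace U \<and> vec.dim U = k}"

definition covering_code :: "nat \<Rightarrow> nat \<Rightarrow> nat \<Rightarrow> (('a::field)^'n) set set \<Rightarrow> bool" where
  "covering_code k \<delta> \<alpha> C \<longleftrightarrow> C \<subseteq> grassmannian k \<and>
     (\<forall>S \<subseteq> C. card S = \<alpha> \<longrightarrow> vec.dim (vec.span (\<Union>S)) \<ge> k + \<delta>)"

text \<open>B_q(n,k,delta;alpha): maximum size of such a code (q = CARD('a), n = CARD('n)).\<close>
definition B_max :: "'a::field itself \<Rightarrow> 'n::finite itself \<Rightarrow> nat \<Rightarrow> nat \<Rightarrow> nat \<Rightarrow> nat" where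
  "B_max _ _ k \<delta> \<alpha> = Max {card C | C :: ('a^'n) set set. covering_code k \<delta> \<alpha> C}"

end

theory Submission
  imports Defs
begin

instance bit :: finite
proof
  have u: "(UNIV::bit set) = {0,1}" using bit.exhaust by auto
  show "finite (UNIV::bit set)" by (subst u) simp
qed

lemma bit_indep:
  fixes S :: "(bit^'n) set"
  assumes "\<And>T. T \<subseteq> S \<Longrightarrow> T \<noteq> {} \<Longrightarrow> sum id T \<noteq> 0"
  shows "vec.independent S"
  unfolding vec.independent_explicit_finite_subsets
proof (intro allI impI ballI)
  fix T u v
  assume T: "T \<subseteq> S" "finite T" and s: "(\<Sum>v\<in>T. u v *s v) = 0" and v: "v \<in> T"
  define T' where "T' = {v\<in>T. u v = 1}"
  have "(\<Sum>v\<in>T. u v *s v) = (\<Sum>v\<in>T'. u v *s v)"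
    unfolding T'_def by (rule sum.mono_neutral_right) (use T in auto)
  also have "\<dots> = sum id T'"
    unfolding T'_def by (rule sum.cong) auto
  finally have "sum id T' = 0" using s by simp
  hence "T' = {}" using assms[of T'] T unfolding T'_def by blast
  thus "u v = 0" using v unfolding T'_def by auto
qed

definition ee :: "('n::finite \<Rightarrow> nat) \<Rightarrow> nat \<Rightarrow> nat set \<Rightarrow> nat \<Rightarrow> bit^'n" where
  "ee h k X j = (\<chi> p. if h p mod k = j \<and> (h p div k = 0 \<or> h p div k \<in> X) then 1 else 0)"

context
  fixes h :: "'n::finite \<Rightarrow> nat" and k m :: nat
  assumes bij: "bij_betw h UNIV {0..<CARD('n)}" and kpos: "0 < k"
    and km: "(m+1)*k \<le> CARD('n)"
begin

lemma pos_ex: "i \<le> m \<Longrightarrow> j < k \<Longrightarrow> \<exists>p. h p = i*k+j"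
proof -
  assume a: "i \<le> m" "j < k"
  have "i*k + j < i*k + k" using a by simp
  also have "\<dots> = (i+1)*k" by simp
  also have "\<dots> \<le> (m+1)*k" using a by (intro mult_le_mono1) simp
  finally have "i*k+j \<in> {0..<CARD('n)}" using km by simp
  thus ?thesis using bij unfolding bij_betw_def by (metis imageE)
qed

lemma coord: "j' < k \<Longrightarrow> h p = i*k+j' \<Longrightarrow>
   ee h k X j $ p = (if j = j' \<and> (i = 0 \<or> i \<in> X) then 1 else 0)"
proof -
  assume a: "j' < k" "h p = i*k+j'"
  have d: "h p div k = i" using a kpos by simp
  have md: "h p mod k = j'" using a kpos by simp
  show ?thesis unfolding ee_def vec_lambda_beta d md by (simp only: eq_commute[of j j'])
qed

lemma ee_inj:
  assumes "X \<subseteq> {1..m}" "Y \<subseteq> {1..m}" "j < k" "j' < k" "ee h k X j = ee h k Y j'"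
  shows "X = Y \<and> j = j'"
proof -
  obtain p0 where p0: "h p0 = 0*k+j" using pos_ex assms by blast
  have "ee h k X j $ p0 = 1" using coord[OF assms(3) p0] by simp
  hence "ee h k Y j' $ p0 = 1" using assms(5) by simp
  hence jj: "j' = j" using coord[OF assms(3) p0, of Y j'] by (simp split: if_splits)
  have sub: "A \<subseteq> B" if AB: "A \<subseteq> {1..m}" "ee h k A j = ee h k B j" for A B
  proof
    fix i assume i: "i \<in> A"
    have im: "i \<le> m" "i \<noteq> 0" using i AB by auto
    then obtain p where p: "h p = i*k+j" using pos_ex assms(3) by blast
    have "ee h k A j $ p = 1" using coord[OF assms(3) p] i by simp
    hence "ee h k B j $ p = 1" using AB(2) by simp
    hence "(if j = j \<and> (i = 0 \<or> i \<in> B) then 1 else 0) = (1::bit)" using coord[OF assms(3) p, of B j] by simp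
    thus "i \<in> B" using im(2) by (simp split: if_splits)
  qed
  have "X \<subseteq> Y" using sub[OF assms(1)] assms(5) jj by simp
  moreover have "Y \<subseteq> X" using sub[OF assms(2)] assms(5) jj by simp
  ultimately show ?thesis using jj by auto
qed

definition EE where "EE X = (\<lambda>j. ee h k X j) ` {..<k}"

lemma sum_nz:
  assumes fin: "finite \<S>" and c3: "card \<S> \<le> 3" and sub: "\<S> \<subseteq> Pow {1..m}"
    and T: "T \<subseteq> (\<Union>X\<in>\<S>. EE X)" "T \<noteq> {}"
  shows "sum id T \<noteq> 0"
proof
  assume z: "sum id T = 0"
  obtain v where "v \<in> T" using T by blast
  then obtain X0 j where X0: "X0 \<in> \<S>" "j < k" "ee h k X0 j \<in> T" using T unfolding EE_def by blast
  define S where "S = {Y\<in>\<S>. ee h k Y j \<in> T}"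
  have inj: "inj_on (\<lambda>Y. ee h k Y j) \<S>"
    by (rule inj_onI) (use ee_inj X0 sub in blast)
  have key: "(\<Sum>Y\<in>S. if i = 0 \<or> i \<in> Y then 1 else 0) = (0::bit)"
    if i: "i \<le> m" and p: "h p = i*k+j" for i p
  proof -
    have "(0::bit) = sum id T $ p" using z by simp
    also have "\<dots> = (\<Sum>v\<in>T. v $ p)" by simp
    also have "\<dots> = (\<Sum>v\<in>(\<lambda>Y. ee h k Y j) ` S. v $ p)"
    proof -
      have s1: "(\<lambda>Y. ee h k Y j) ` S \<subseteq> T" unfolding S_def by auto
      have s2: "\<forall>v\<in>T - (\<lambda>Y. ee h k Y j) ` S. v $ p = 0"
      proof
        fix v assume v: "v \<in> T - (\<lambda>Y. ee h k Y j) ` S"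
        then obtain Y j' where Y: "Y \<in> \<S>" "j' < k" "v = ee h k Y j'" using T unfolding EE_def by blast
        have "j' \<noteq> j" using v Y unfolding S_def by auto
        thus "v $ p = 0" using coord[OF X0(2) p, of Y j'] Y by simp
      qed
      show ?thesis by (rule sum.mono_neutral_right[OF finite s1 s2])
    qed
    also have "\<dots> = (\<Sum>Y\<in>S. ee h k Y j $ p)"
      by (rule sum.reindex_cong[of "\<lambda>Y. ee h k Y j"]) (use inj in \<open>auto simp: S_def intro: inj_on_subset\<close>)
    also have "\<dots> = (\<Sum>Y\<in>S. if i = 0 \<or> i \<in> Y then 1 else 0)"
      by (rule sum.cong) (use coord[OF X0(2) p] in auto)
    finally show ?thesis by simp
  qed
  have X0S: "X0 \<in> S" using X0 unfolding S_def by auto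
  have finS: "finite S" using fin unfolding S_def by auto
  have cS: "card S \<le> 3" using c3 card_mono[OF fin, of S] unfolding S_def by auto
  have cS0: "card S \<noteq> 0" using X0S finS by auto
  obtain p0 where p0: "h p0 = 0*k+j" using pos_ex X0 by blast
  have "(\<Sum>Y\<in>S. if 0 = (0::nat) \<or> 0 \<in> Y then 1 else 0) = (0::bit)" using key[OF _ p0] by simp
  hence c: "of_nat (card S) = (0::bit)" by simp
  show False
  proof (cases "card S = 2")
    case True
    then obtain X Y where XY: "S = {X, Y}" "X \<noteq> Y" by (auto simp: card_2_iff)
    have XYs: "X \<subseteq> {1..m}" "Y \<subseteq> {1..m}" using XY sub unfolding S_def by auto
    obtain i where i: "(i \<in> X \<and> i \<notin> Y) \<or> (i \<in> Y \<and> i \<notin> X)" using XY by blast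
    have im: "i \<le> m" "i \<noteq> 0" using i XYs by auto
    obtain p where p: "h p = i*k+j" using pos_ex im X0 by blast
    show False using key[OF im(1) p] XY i im by auto
  next
    case False
    hence "card S = 1 \<or> card S = 3" using cS cS0 by linarith
    thus False using c by auto
  qed
qed

lemma indep: "finite \<S> \<Longrightarrow> card \<S> \<le> 3 \<Longrightarrow> \<S> \<subseteq> Pow {1..m} \<Longrightarrow>
   vec.independent (\<Union>X\<in>\<S>. EE X)"
  by (rule bit_indep) (rule sum_nz)

lemma card_EE: "X \<subseteq> {1..m} \<Longrightarrow> card (EE X) = k"
proof -
  assume a: "X \<subseteq> {1..m}"
  have "inj_on (\<lambda>j. ee h k X j) {..<k}"
    by (rule inj_onI) (use ee_inj[OF a a] in blast)
  thus ?thesis unfolding EE_def by (simp add: card_image)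
qed

lemma card_UEE: "finite \<S> \<Longrightarrow> \<S> \<subseteq> Pow {1..m} \<Longrightarrow> card (\<Union>X\<in>\<S>. EE X) = card \<S> * k"
proof -
  assume f: "finite \<S>" and s: "\<S> \<subseteq> Pow {1..m}"
  have "card (\<Union>X\<in>\<S>. EE X) = (\<Sum>X\<in>\<S>. card (EE X))"
  proof (rule card_UN_disjoint[OF f])
    show "\<forall>i\<in>\<S>. finite (EE i)" unfolding EE_def by simp
    show "\<forall>i\<in>\<S>. \<forall>j\<in>\<S>. i \<noteq> j \<longrightarrow> EE i \<inter> EE j = {}"
      unfolding EE_def using s ee_inj by blast
  qed
  also have "\<dots> = (\<Sum>X\<in>\<S>. k)" by (rule sum.cong) (use s card_EE in auto)
  also have "\<dots> = card \<S> * k" by simp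
  finally show ?thesis .
qed

lemma dim_EE: "X \<subseteq> {1..m} \<Longrightarrow> vec.dim (vec.span (EE X)) = k"
proof -
  assume X: "X \<subseteq> {1..m}"
  have "vec.independent (\<Union>Y\<in>{X}. EE Y)" by (rule indep) (use X in auto)
  hence "vec.independent (EE X)" by simp
  thus ?thesis using card_EE[OF X] by (metis vec.dim_span_eq_card_independent)
qed

lemma inj_U: "inj_on (\<lambda>X. vec.span (EE X)) (Pow {1..m})"
proof (rule inj_onI, rule ccontr)
  fix X Y assume X: "X \<in> Pow {1..m}" and Y: "Y \<in> Pow {1..m}"
    and e: "vec.span (EE X) = vec.span (EE Y)" and ne: "X \<noteq> Y"
  have i: "vec.independent (\<Union>Z\<in>{X,Y}. EE Z)" by (rule indep) (use X Y in \<open>auto simp: card_insert_if\<close>)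
  have c: "card (\<Union>Z\<in>{X,Y}. EE Z) = 2*k" using card_UEE[of "{X,Y}"] X Y ne by simp
  have "(\<Union>Z\<in>{X,Y}. EE Z) \<subseteq> vec.span (EE X)"
    using e vec.span_superset[of "EE X"] vec.span_superset[of "EE Y"] by auto
  from vec.independent_card_le_dim[OF this i] c dim_EE X
  show False using kpos by simp
qed

end

theorem mainTheorem12:
  fixes k :: nat
  assumes "k > 0" and "CARD('n::finite) \<ge> 3 * k"
  shows "B_max TYPE(bit) TYPE('n) k (2 * k) 3 \<ge> 2 ^ ((CARD('n) - k) div k)"
proof -
  obtain h :: "'n \<Rightarrow> nat" where bij: "bij_betw h UNIV {0..<CARD('n)}"
    using ex_bij_betw_finite_nat[of "UNIV :: 'n set"] by auto
  define m where "m = (CARD('n) - k) div k"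
  have "m * k \<le> CARD('n) - k" unfolding m_def by (rule div_times_less_eq_dividend)
  hence km: "(m+1)*k \<le> CARD('n)" using assms by simp
  define U where "U X = vec.span (EE h k X)" for X
  define C where "C = U ` Pow {1..m}"
  have inj: "inj_on U (Pow {1..m})" unfolding U_def by (rule inj_U[OF bij assms(1) km])
  have cC: "card C = 2 ^ m" unfolding C_def using card_image[OF inj] by (simp add: card_Pow)
  have code: "covering_code k (2*k) 3 C"
    unfolding covering_code_def
  proof (intro conjI allI impI)
    show "C \<subseteq> grassmannian k"
      unfolding C_def U_def grassmannian_def
      using dim_EE[OF bij assms(1) km] by (auto simp: vec.subspace_span)
  next
    fix S assume S: "S \<subseteq> C" "card S = 3"
    define \<S> where "\<S> = {X \<in> Pow {1..m}. U X \<in> S}"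
    have SS: "S = U ` \<S>" using S unfolding \<S>_def C_def by auto
    have c3: "card \<S> = 3" using S SS card_image[OF inj_on_subset[OF inj, of \<S>]]
      unfolding \<S>_def by auto
    have f: "finite \<S>" using c3 by (metis card.infinite zero_neq_numeral)
    have s: "\<S> \<subseteq> Pow {1..m}" unfolding \<S>_def by auto
    have i: "vec.independent (\<Union>X\<in>\<S>. EE h k X)" by (rule indep[OF bij assms(1) km f]) (use c3 s in auto)
    have cu: "card (\<Union>X\<in>\<S>. EE h k X) = 3 * k" using card_UEE[OF bij assms(1) km f s] c3 by simp
    have "(\<Union>X\<in>\<S>. EE h k X) \<subseteq> \<Union>S"
    proof
      fix v assume "v \<in> (\<Union>X\<in>\<S>. EE h k X)"
      then obtain X where X: "X \<in> \<S>" "v \<in> EE h k X" by blast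
      then have "v \<in> U X" unfolding U_def using vec.span_superset by blast
      moreover have "U X \<in> S" using X(1) SS by blast
      ultimately show "v \<in> \<Union>S" by blast
    qed
    also have "\<Union>S \<subseteq> vec.span (\<Union>S)" by (rule vec.span_superset)
    finally have "(\<Union>X\<in>\<S>. EE h k X) \<subseteq> vec.span (\<Union>S)" .
    from vec.independent_card_le_dim[OF this i] cu
    show "k + 2*k \<le> vec.dim (vec.span (\<Union>S))" by simp
  qed
  have fin: "finite {card C | C :: (bit^'n) set set. covering_code k (2*k) 3 C}"
  proof -
    have "{card C | C :: (bit^'n) set set. covering_code k (2*k) 3 C} \<subseteq> card ` (UNIV :: (bit^'n) set set set)" by blast
    thus ?thesis by (rule finite_subset) simp
  qed
  have "card C \<le> B_max TYPE(bit) TYPE('n) k (2 * k) 3"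
    unfolding B_max_def by (rule Max_ge[OF fin]) (use code in blast)
  thus ?thesis using cC m_def by simp
qed

end
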